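(* Let $G=(V,E)$ be a computation graph with vertices $v_1,\dots,v_n$, let $M$ be the fast-memory size, and let $J^*_G$ be the minimum number of non-trivial I/Os over all valid evaluations of $G$. Let $\tilde L$ and $W^{(k)}$ be as defined in the context. Then $J^*_G$ is at least the optimal value of $$\min_{X\in\mathcal{O}_G}\ \max_{1\le k\le n}\ \left(\operatorname{tr}\!\left(X^T\tilde L X W^{(k)}\right) - 2kM\right).$$
   Context: A computation graph is a finite directed acyclic graph $G=(V,E)$. Each vertex is an operation producing a single element, and an edge $(u,v)$ means the result of $u$ is an operand of $v$. Sources are the inputs and sinks are the outputs. Execution model: a single processor has a fast memory holding at most $M$ elements and an unbounded slow memory. Every vertex is evaluated exactly once (no recomputation), in an order that is topological with respect to $G$. To evaluate $v$, all parents of $v$ must be in fast memory; a parent not present must be read from slow memory. The eviction policy is unconstrained, but a value that is evicted while still needed by a later vertex must first be written to slow memory. Only non-trivial I/O is counted. Inputs can be placed directly into fast memory at no cost, and outputs are reported immediately at no cost when computed. However, an input that is evicted while still needed must be written to slow memory. Each transfer of one element between fast and slow memory counts as one I/O. An evaluation order is encoded as an $n\times n$ permutation matrix $X$ with $X_{ij}=1$ iff vertex $v_i$ is evaluated at time step $j$. $\mathcal{O}_G$ is the set of such matrices corresponding to topological orders of $G$. $\tilde G$ is the weighted undirected graph on $V$ containing, for each directed edge $(u,v)\in E$, the undirected edge $\{u,v\}$ with weight $1/d_{out}(u)$, where $d_{out}$ is out-degree in $G$. $\tilde L=\tilde D-\tilde A$ is its Laplacian, with $\tilde A$ the weighted adjacency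 matrix and $\tilde D$ the diagonal weighted-degree matrix. For $1\le k\le n$, split the time steps $1,\dots,n$ into $k$ consecutive blocks: the first $n \bmod k$ blocks have $\lfloor n/k\rfloor+1$ elements and the remaining blocks have $\lfloor n/k\rfloor$ elements. Let $\hat W^{(k)}\in\{0,1\}^{n\times k}$ have $(\hat W^{(k)})_{tj}=1$ iff time step $t$ lies in block $j$, and set $W^{(k)}=\hat W^{(k)}(\hat W^{(k)})^T$. *)

theory Defs
  imports "Jordan_Normal_Form.Matrix" "HOL-Library.Extended_Real"
begin

text \<open>A computation graph on vertices v_1..v_n is represented with vertex set {0..<n}
  (vertex v_(i+1) is the number i) and a set E of directed edges (u,v), meaning that
  the result of u is an operand of v.\<close>

definition comp_graph :: "nat \<Rightarrow> (nat \<times> nat) set \<Rightarrow> bool" where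
  "comp_graph n E \<longleftrightarrow> E \<subseteq> {0..<n} \<times> {0..<n} \<and> acyclic E"

definition out_deg :: "(nat \<times> nat) set \<Rightarrow> nat \<Rightarrow> nat" where
  "out_deg E u = card {v. (u, v) \<in> E}"

datatype action =
    Compute nat
  | Read nat
  | Write nat
  | Evict nat

text \<open>State: (F, S, C) = (contents of fast memory, contents of slow memory,
  vertices already evaluated).  Inputs (sources) are evaluated by a Compute action
  with no parents, i.e. placed into fast memory for free; outputs are simply computed
  (reported for free) and may then be evicted for free.  A value that is evicted
  without having been written can never be brought back, since Read requires the value
  to be in slow memory and recomputation is forbidden.\<close>

type_synonym mstate = "nat set \<times> nat set \<times> nat set"

fun step :: "nat \<Rightarrow> (nat \<times> nat) set \<Rightarrow> action \<Rightarrow> mstate \<Rightarrow> mstate option" where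
  "step n E (Compute v) (F, S, C) =
     (if v < n \<and> v \<notin> C \<and> (\<forall>u. (u, v) \<in> E \<longrightarrow> u \<in> F)
      then Some (insert v F, S, insert v C) else None)"
| "step n E (Read u) (F, S, C) = (if u \<in> S then Some (insert u F, S, C) else None)"
| "step n E (Write u) (F, S, C) = (if u \<in> F then Some (F, insert u S, C) else None)"
| "step n E (Evict u) (F, S, C) = (if u \<in> F then Some (F - {u}, S, C) else None)"

fun run :: "nat \<Rightarrow> (nat \<times> nat) set \<Rightarrow> nat \<Rightarrow> action list \<Rightarrow> mstate \<Rightarrow> mstate option" where
  "run n E M [] st = Some st"
| "run n E M (a # as) st =
     (case step n E a st of
        None \<Rightarrow> None
      | Some (F, S, C) \<Rightarrow> if card F \<le> M then run n E M as (F, S, C) else None)"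

text \<open>A valid evaluation: starting from empty memories, all actions are legal, memory
  capacity is respected, and at the end every vertex has been evaluated (each exactly
  once, since Compute requires the vertex not to be evaluated yet).\<close>
definition valid_eval :: "nat \<Rightarrow> (nat \<times> nat) set \<Rightarrow> nat \<Rightarrow> action list \<Rightarrow> bool" where
  "valid_eval n E M as \<longleftrightarrow>
     (\<exists>F S. run n E M as ({}, {}, {}) = Some (F, S, {0..<n}))"

fun is_io :: "action \<Rightarrow> bool" where
  "is_io (Read _) = True"
| "is_io (Write _) = True"
| "is_io _ = False"

definition io_cost :: "action list \<Rightarrow> nat" where
  "io_cost as = length (filter is_io as)"

text \<open>J*_G : minimum number of non-trivial I/Os over all valid evaluations
  (infinity if there is none).\<close>
definition J_star :: "nat \<Rightarrow> (nat \<times> nat) set \<Rightarrow> nat \<Rightarrow> enat" where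
  "J_star n E M = (INF as \<in> {as. valid_eval n E M as}. enat (io_cost as))"

text \<open>Time steps 1..n are represented by 0..<n.  X_(ij) = 1 iff vertex i is evaluated at
  time step j.\<close>
definition O_G :: "nat \<Rightarrow> (nat \<times> nat) set \<Rightarrow> real mat set" where
  "O_G n E = {X. \<exists>\<sigma>. bij_betw \<sigma> {0..<n} {0..<n}
                  \<and> (\<forall>u v. (u, v) \<in> E \<longrightarrow> \<sigma> u < \<sigma> v)
                  \<and> X = mat n n (\<lambda>(i, j). if \<sigma> i = j then 1 else 0)}"

definition A_tilde :: "nat \<Rightarrow> (nat \<times> nat) set \<Rightarrow> real mat" where
  "A_tilde n E = mat n n (\<lambda>(u, v).
      (if (u, v) \<in> E then 1 / real (out_deg E u) else 0)
    + (if (v, u) \<in> E then 1 / real (out_deg E v) else 0))"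

definition D_tilde :: "nat \<Rightarrow> (nat \<times> nat) set \<Rightarrow> real mat" where
  "D_tilde n E = mat n n (\<lambda>(u, v).
      if u = v then (\<Sum>w<n. A_tilde n E $$ (u, w)) else 0)"

definition L_tilde :: "nat \<Rightarrow> (nat \<times> nat) set \<Rightarrow> real mat" where
  "L_tilde n E = D_tilde n E - A_tilde n E"

text \<open>Block j (0-based, j < k) consists of the time steps t (0-based) with
  block_start n k j \<le> t < block_start n k (j+1); the first n mod k blocks have
  n div k + 1 elements and the remaining ones n div k.\<close>
definition block_start :: "nat \<Rightarrow> nat \<Rightarrow> nat \<Rightarrow> nat" where
  "block_start n k j = j * (n div k) + min j (n mod k)"

definition W_hat :: "nat \<Rightarrow> nat \<Rightarrow> real mat" where
  "W_hat n k = mat n k (\<lambda>(t, j).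
      if block_start n k j \<le> t \<and> t < block_start n k (Suc j) then 1 else 0)"

definition W :: "nat \<Rightarrow> nat \<Rightarrow> real mat" where
  "W n k = W_hat n k * transpose_mat (W_hat n k)"

definition mat_trace :: "real mat \<Rightarrow> real" where
  "mat_trace A = (\<Sum>i<dim_row A. A $$ (i, i))"

end

theory Submission
  imports Defs
begin

fun comps :: "action list \<Rightarrow> nat list" where
  "comps [] = []"
| "comps (Compute v # as) = v # comps as"
| "comps (Read v # as) = comps as"
| "comps (Write v # as) = comps as"
| "comps (Evict v # as) = comps as"

lemma comps_append[simp]: "comps (xs @ ys) = comps xs @ comps ys"
  by (induction xs rule: comps.induct) auto

lemma comps_set: "v \<in> set (comps as) \<Longrightarrow> Compute v \<in> set as"
  by (induction as rule: comps.induct) auto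

lemma run_append:
  "run n E M (xs @ ys) st = (case run n E M xs st of None \<Rightarrow> None | Some st' \<Rightarrow> run n E M ys st')"
proof (induction xs arbitrary: st)
  case Nil
  then show ?case by simp
next
  case (Cons a xs)
  show ?case
    by (auto simp: Cons split: option.splits prod.splits)
qed

lemma run_appendD:
  assumes "run n E M (xs @ ys) st = Some r"
  obtains m where "run n E M xs st = Some m" "run n E M ys m = Some r"
  using assms by (auto simp: run_append split: option.splits)

lemma run_inv:
  "run n E M xs (F,S,C) = Some (F',S',C') \<Longrightarrow> F \<subseteq> C \<Longrightarrow> S \<subseteq> C \<Longrightarrow>
   F' \<subseteq> C' \<and> S' \<subseteq> C' \<and> C' = C \<union> set (comps xs) \<and> distinct (comps xs)
   \<and> set (comps xs) \<inter> C = {} \<and> set (comps xs) \<subseteq> {0..<n}"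
proof (induction xs arbitrary: F S C)
  case Nil
  then show ?case by simp
next
  case (Cons a xs)
  show ?case
  proof (cases a)
    case (Compute v)
    with Cons.prems show ?thesis
      by (auto split: if_splits dest!: Cons.IH)
  next
    case (Read v)
    with Cons.prems show ?thesis
      by (auto split: if_splits dest!: Cons.IH)
  next
    case (Write v)
    with Cons.prems show ?thesis
      by (auto split: if_splits dest!: Cons.IH)
  next
    case (Evict v)
    with Cons.prems show ?thesis
      by (auto split: if_splits dest!: Cons.IH)
  qed
qed

lemma run_card:
  "run n E M xs (F,S,C) = Some (F',S',C') \<Longrightarrow> card F \<le> M \<Longrightarrow> card F' \<le> M"
proof (induction xs arbitrary: F S C)
  case Nil
  then show ?case by simp
next
  case (Cons a xs)
  show ?case
  proof (cases a)
    case (Compute v)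
    with Cons.prems show ?thesis
      by (auto split: if_splits dest!: Cons.IH)
  next
    case (Read v)
    with Cons.prems show ?thesis
      by (auto split: if_splits dest!: Cons.IH)
  next
    case (Write v)
    with Cons.prems show ?thesis
      by (auto split: if_splits dest!: Cons.IH)
  next
    case (Evict v)
    with Cons.prems show ?thesis
      by (auto split: if_splits dest!: Cons.IH)
  qed
qed

lemma read_needed:
  "run n E M zs (F,S,C) = Some (F',S',C') \<Longrightarrow> u \<notin> F \<Longrightarrow> u \<in> C \<Longrightarrow> u \<in> F' \<Longrightarrow> Read u \<in> set zs"
proof (induction zs arbitrary: F S C)
  case Nil
  then show ?case by simp
next
  case (Cons a xs)
  show ?case
  proof (cases a)
    case (Compute v)
    with Cons.prems show ?thesis
      by (auto split: if_splits dest!: Cons.IH)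
  next
    case (Read v)
    with Cons.prems show ?thesis
      by (auto split: if_splits dest!: Cons.IH)
  next
    case (Write v)
    with Cons.prems show ?thesis
      by (auto split: if_splits dest!: Cons.IH)
  next
    case (Evict v)
    with Cons.prems show ?thesis
      by (auto split: if_splits dest!: Cons.IH)
  qed
qed

lemma write_needed:
  "run n E M zs (F,S,C) = Some (F',S',C') \<Longrightarrow> u \<notin> S \<Longrightarrow> u \<in> S' \<Longrightarrow> Write u \<in> set zs"
proof (induction zs arbitrary: F S C)
  case Nil
  then show ?case by simp
next
  case (Cons a xs)
  show ?case
  proof (cases a)
    case (Compute v)
    with Cons.prems show ?thesis
      by (auto split: if_splits dest!: Cons.IH)
  next
    case (Read v)
    with Cons.prems show ?thesis
      by (auto split: if_splits dest!: Cons.IH)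
  next
    case (Write v)
    with Cons.prems show ?thesis
      by (auto split: if_splits dest!: Cons.IH)
  next
    case (Evict v)
    with Cons.prems show ?thesis
      by (auto split: if_splits dest!: Cons.IH)
  qed
qed


section \<open>Blocks\<close>

definition blk :: "nat \<Rightarrow> nat \<Rightarrow> nat \<Rightarrow> nat" where
  "blk n k t = (LEAST j. t < block_start n k (Suc j))"

lemma bs_mono: "i \<le> j \<Longrightarrow> block_start n k i \<le> block_start n k j"
  unfolding block_start_def by (intro add_mono mult_le_mono1 min.mono) auto

lemma bs_k: "0 < k \<Longrightarrow> block_start n k k = n"
proof -
  assume "0 < k"
  then have "n mod k < k" by simp
  then show ?thesis unfolding block_start_def by (simp add: min_def mult.commute)
qed

lemma bs_0[simp]: "block_start n k 0 = 0"
  unfolding block_start_def by simp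

lemma blk_props:
  assumes "0 < k" "t < n"
  shows "blk n k t < k" "block_start n k (blk n k t) \<le> t" "t < block_start n k (Suc (blk n k t))"
proof -
  have ex: "t < block_start n k (Suc (k - 1))" using assms bs_k[of k n] by simp
  show "blk n k t < k" unfolding blk_def using Least_le[of "\<lambda>j. t < block_start n k (Suc j)", OF ex] assms by linarith
  show "t < block_start n k (Suc (blk n k t))" unfolding blk_def using LeastI[of "\<lambda>j. t < block_start n k (Suc j)", OF ex] .
  show "block_start n k (blk n k t) \<le> t"
  proof (cases "blk n k t")
    case 0 then show ?thesis by simp
  next
    case (Suc m)
    have "\<not> t < block_start n k (Suc m)"
      using not_less_Least[of m "\<lambda>j. t < block_start n k (Suc j)"] Suc unfolding blk_def by simp
    then show ?thesis using Suc by simp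
  qed
qed

lemma blk_unique:
  assumes "block_start n k j \<le> t" "t < block_start n k (Suc j)"
  shows "blk n k t = j"
  unfolding blk_def
proof (rule Least_equality)
  show "t < block_start n k (Suc j)" by fact
  fix j' assume "t < block_start n k (Suc j')"
  show "j \<le> j'"
  proof (rule ccontr)
    assume "\<not> j \<le> j'"
    then have "block_start n k (Suc j') \<le> block_start n k j" by (intro bs_mono) auto
    then show False using assms \<open>t < block_start n k (Suc j')\<close> by linarith
  qed
qed

lemma blk_mono:
  assumes "0 < k" "s \<le> t" "t < n"
  shows "blk n k s \<le> blk n k t"
proof -
  have "s < block_start n k (Suc (blk n k t))" using blk_props[OF assms(1,3)] assms by linarith
  then show ?thesis unfolding blk_def by (rule Least_le)
qed

lemma mult_entry:
  "A \<in> carrier_mat a b \<Longrightarrow> B \<in> carrier_mat b c \<Longrightarrow> i < a \<Longrightarrow> j < c \<Longrightarrow>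
   (A * B) $$ (i, j) = (\<Sum>l<b. A $$ (i, l) * B $$ (l, j))"
  by (auto simp: scalar_prod_def atLeast0LessThan intro!: sum.cong)

lemma W_hat_entry:
  assumes "0 < k" "s < n" "j < k"
  shows "W_hat n k $$ (s, j) = (if blk n k s = j then 1 else 0)"
  using assms blk_props[OF assms(1,2)] blk_unique[of n k j s]
  unfolding W_hat_def by auto

lemma W_entry:
  assumes "0 < k" "s < n" "t < n"
  shows "W n k $$ (s, t) = (if blk n k s = blk n k t then 1 else 0)"
proof -
  have dW: "dim_row (W_hat n k) = n" "dim_col (W_hat n k) = k" by (simp_all add: W_hat_def)
  have "W n k $$ (s, t) = (\<Sum>j<k. W_hat n k $$ (s, j) * transpose_mat (W_hat n k) $$ (j, t))"
    unfolding W_def by (rule mult_entry[of _ n k _ n]) (auto simp: W_hat_def assms)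
  also have "\<dots> = (\<Sum>j<k. (if blk n k s = j then 1 else 0) * (if blk n k t = j then 1 else 0))"
    using dW by (intro sum.cong refl) (simp add: W_hat_entry assms)
  also have "\<dots> = (\<Sum>j<k. if blk n k s = j then (if blk n k t = j then 1 else 0) else 0)"
    by (intro sum.cong refl) simp
  also have "\<dots> = (if blk n k s = blk n k t then 1 else 0)"
    using blk_props(1)[OF assms(1,2)] by (simp add: sum.delta)
  finally show ?thesis .
qed

lemma delta_sum:
  fixes f :: "nat \<Rightarrow> real"
  shows "a < n \<Longrightarrow> (\<Sum>s<n. (if a = s then 1 else 0) * f s) = f a"
proof -
  assume "a < n"
  have "(\<Sum>s<n. (if a = s then 1 else 0) * f s) = (\<Sum>s<n. if a = s then f s else 0)"
    by (intro sum.cong) auto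
  then show ?thesis using \<open>a < n\<close> by (simp add: sum.delta)
qed

lemma trace_perm:
  fixes L Wm :: "real mat"
  assumes L: "L \<in> carrier_mat n n" and Wm: "Wm \<in> carrier_mat n n" and sg: "\<forall>i<n. \<sigma> i < n"
  defines "X \<equiv> mat n n (\<lambda>(i, j). if \<sigma> i = j then 1 else 0)"
  shows "mat_trace (transpose_mat X * L * X * Wm) = (\<Sum>i<n. \<Sum>j<n. L $$ (i, j) * Wm $$ (\<sigma> j, \<sigma> i))"
proof -
  have X: "X \<in> carrier_mat n n" unfolding X_def by simp
  have XT: "transpose_mat X \<in> carrier_mat n n" using X by simp
  have Xe: "\<And>i j. i < n \<Longrightarrow> j < n \<Longrightarrow> X $$ (i, j) = (if \<sigma> i = j then 1 else 0)"
    unfolding X_def by simp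
  have XTL: "transpose_mat X * L \<in> carrier_mat n n" using XT L by simp
  have XTLX: "transpose_mat X * L * X \<in> carrier_mat n n" using XTL X by simp
  have e1: "(transpose_mat X * L) $$ (s, j) = (\<Sum>i<n. L $$ (i, j) * (if \<sigma> i = s then 1 else 0))"
    if "s < n" "j < n" for s j
    proof -
    have "(transpose_mat X * L) $$ (s, j) = (\<Sum>i<n. transpose_mat X $$ (s, i) * L $$ (i, j))"
      by (rule mult_entry[OF XT L that])
    also have "\<dots> = (\<Sum>i<n. L $$ (i, j) * (if \<sigma> i = s then 1 else 0))"
      by (rule sum.cong[OF refl]) (use that X in \<open>simp add: Xe\<close>)
    finally show ?thesis .
  qed
  have e2: "(transpose_mat X * L * X) $$ (s, t) = (\<Sum>j<n. (transpose_mat X * L) $$ (s, j) * (if \<sigma> j = t then 1 else 0))"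
    if "s < n" "t < n" for s t
    using mult_entry[OF XTL X that] that by (simp add: Xe)
  have "mat_trace (transpose_mat X * L * X * Wm) = (\<Sum>s<n. (transpose_mat X * L * X * Wm) $$ (s, s))"
    unfolding mat_trace_def using XTLX Wm X by simp
  also have "\<dots> = (\<Sum>s<n. \<Sum>t<n. (transpose_mat X * L * X) $$ (s, t) * Wm $$ (t, s))"
    by (intro sum.cong refl mult_entry[OF XTLX Wm]) auto
  also have "\<dots> = (\<Sum>s<n. \<Sum>t<n. \<Sum>j<n. (transpose_mat X * L) $$ (s, j) * ((if \<sigma> j = t then 1 else 0) * Wm $$ (t, s)))"
    by (intro sum.cong refl) (simp add: e2 sum_distrib_right mult.assoc)
  also have "\<dots> = (\<Sum>s<n. \<Sum>j<n. (transpose_mat X * L) $$ (s, j) * (\<Sum>t<n. (if \<sigma> j = t then 1 else 0) * Wm $$ (t, s)))"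
    by (rule sum.cong[OF refl], subst sum.swap, simp add: sum_distrib_left)
  also have "\<dots> = (\<Sum>s<n. \<Sum>j<n. (transpose_mat X * L) $$ (s, j) * Wm $$ (\<sigma> j, s))"
    by (intro sum.cong refl) (simp add: delta_sum sg)
  also have "\<dots> = (\<Sum>s<n. \<Sum>j<n. \<Sum>i<n. L $$ (i, j) * ((if \<sigma> i = s then 1 else 0) * Wm $$ (\<sigma> j, s)))"
  proof (intro sum.cong refl)
    fix s j assume "s \<in> {..<n}" "j \<in> {..<n}"
    then have sj: "s < n" "j < n" by auto
    show "(transpose_mat X * L) $$ (s, j) * Wm $$ (\<sigma> j, s) =
      (\<Sum>i<n. L $$ (i, j) * ((if \<sigma> i = s then 1 else 0) * Wm $$ (\<sigma> j, s)))"
      by (simp only: e1[OF sj] sum_distrib_right mult.assoc)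
  qed
  also have "\<dots> = (\<Sum>j<n. \<Sum>s<n. \<Sum>i<n. L $$ (i, j) * ((if \<sigma> i = s then 1 else 0) * Wm $$ (\<sigma> j, s)))"
    by (rule sum.swap)
  also have "\<dots> = (\<Sum>j<n. \<Sum>i<n. \<Sum>s<n. L $$ (i, j) * ((if \<sigma> i = s then 1 else 0) * Wm $$ (\<sigma> j, s)))"
    by (rule sum.cong[OF refl], rule sum.swap)
  also have "\<dots> = (\<Sum>j<n. \<Sum>i<n. L $$ (i, j) * (\<Sum>s<n. (if \<sigma> i = s then 1 else 0) * Wm $$ (\<sigma> j, s)))"
    by (simp only: sum_distrib_left)
  also have "\<dots> = (\<Sum>j<n. \<Sum>i<n. L $$ (i, j) * Wm $$ (\<sigma> j, \<sigma> i))"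
    by (intro sum.cong refl) (simp add: delta_sum sg)
  also have "\<dots> = (\<Sum>i<n. \<Sum>j<n. L $$ (i, j) * Wm $$ (\<sigma> j, \<sigma> i))"
    by (rule sum.swap)
  finally show ?thesis .
qed


section \<open>Laplacian sums\<close>

definition aw :: "(nat \<times> nat) set \<Rightarrow> nat \<Rightarrow> nat \<Rightarrow> real" where
  "aw E i j = (if (i, j) \<in> E then 1 / real (out_deg E i) else 0)"

lemma A_entry: "i < n \<Longrightarrow> j < n \<Longrightarrow> A_tilde n E $$ (i, j) = aw E i j + aw E j i"
  unfolding A_tilde_def aw_def by simp

lemma L_carrier: "L_tilde n E \<in> carrier_mat n n"
proof -
  have "A_tilde n E \<in> carrier_mat n n" unfolding A_tilde_def by (rule mat_carrier)
  then show ?thesis unfolding L_tilde_def by (rule minus_carrier_mat)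
qed

lemma W_carrier: "W n k \<in> carrier_mat n n"
  unfolding W_def by (rule mult_carrier_mat[of _ n k]) (simp_all add: W_hat_def)

lemma L_entry: "i < n \<Longrightarrow> j < n \<Longrightarrow>
  L_tilde n E $$ (i, j) = (if i = j then (\<Sum>w<n. A_tilde n E $$ (i, w)) else 0) - A_tilde n E $$ (i, j)"
proof -
  assume ij: "i < n" "j < n"
  have dA: "dim_row (A_tilde n E) = n" "dim_col (A_tilde n E) = n" unfolding A_tilde_def by simp_all
  have dD: "dim_row (D_tilde n E) = n" "dim_col (D_tilde n E) = n" unfolding D_tilde_def by simp_all
  have "L_tilde n E $$ (i, j) = D_tilde n E $$ (i, j) - A_tilde n E $$ (i, j)"
    unfolding L_tilde_def using ij dA dD by simp
  also have "D_tilde n E $$ (i, j) = (if i = j then (\<Sum>w<n. A_tilde n E $$ (i, w)) else 0)"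
    unfolding D_tilde_def using ij by simp
  finally show ?thesis .
qed

lemma lap_sum:
  fixes g :: "nat \<Rightarrow> nat \<Rightarrow> real"
  assumes gii: "\<forall>i<n. g i i = 1" and gs: "\<forall>i j. g i j = g j i"
  shows "(\<Sum>i<n. \<Sum>j<n. L_tilde n E $$ (i, j) * g j i) = 2 * (\<Sum>i<n. \<Sum>j<n. aw E i j * (1 - g i j))"
proof -
  have row: "(\<Sum>j<n. L_tilde n E $$ (i, j) * g j i) = (\<Sum>j<n. (aw E i j + aw E j i) * (1 - g i j))"
    if i: "i < n" for i
  proof -
    have "(\<Sum>j<n. L_tilde n E $$ (i, j) * g j i)
        = (\<Sum>j<n. (if i = j then (\<Sum>w<n. A_tilde n E $$ (i, w)) * g j i else 0) - A_tilde n E $$ (i, j) * g j i)"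
      by (rule sum.cong[OF refl]) (use i in \<open>simp add: L_entry left_diff_distrib\<close>)
    also have "\<dots> = (\<Sum>j<n. if i = j then (\<Sum>w<n. A_tilde n E $$ (i, w)) * g j i else 0) - (\<Sum>j<n. A_tilde n E $$ (i, j) * g j i)"
      by (rule sum_subtractf)
    also have "(\<Sum>j<n. if i = j then (\<Sum>w<n. A_tilde n E $$ (i, w)) * g j i else 0) = (\<Sum>w<n. A_tilde n E $$ (i, w))"
      using i gii by (simp add: sum.delta)
    also have "(\<Sum>w<n. A_tilde n E $$ (i, w)) - (\<Sum>j<n. A_tilde n E $$ (i, j) * g j i)
        = (\<Sum>j<n. A_tilde n E $$ (i, j) * (1 - g i j))"
      by (simp add: sum_subtractf right_diff_distrib gs)
    also have "\<dots> = (\<Sum>j<n. (aw E i j + aw E j i) * (1 - g i j))"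
      by (rule sum.cong[OF refl]) (use i in \<open>simp add: A_entry\<close>)
    finally show ?thesis .
  qed
  have "(\<Sum>i<n. \<Sum>j<n. L_tilde n E $$ (i, j) * g j i) = (\<Sum>i<n. \<Sum>j<n. (aw E i j + aw E j i) * (1 - g i j))"
    by (rule sum.cong[OF refl]) (simp add: row)
  also have "\<dots> = (\<Sum>i<n. \<Sum>j<n. aw E i j * (1 - g i j)) + (\<Sum>i<n. \<Sum>j<n. aw E j i * (1 - g i j))"
    by (simp add: distrib_right sum.distrib)
  also have "(\<Sum>i<n. \<Sum>j<n. aw E j i * (1 - g i j)) = (\<Sum>j<n. \<Sum>i<n. aw E j i * (1 - g i j))"
    by (rule sum.swap)
  also have "\<dots> = (\<Sum>j<n. \<Sum>i<n. aw E j i * (1 - g j i))"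
    using gs by simp
  finally show ?thesis by simp
qed

lemma row_bound:
  fixes h :: "nat \<Rightarrow> real"
  assumes E: "E \<subseteq> {0..<n} \<times> {0..<n}" and h: "\<forall>j. 0 \<le> h j \<and> h j \<le> 1"
  shows "(\<Sum>j<n. aw E i j * h j) \<le> (if (\<exists>j. (i, j) \<in> E \<and> h j \<noteq> 0) then 1 else 0)"
proof (cases "\<exists>j. (i, j) \<in> E \<and> h j \<noteq> 0")
  case False
  then have z: "\<And>j. aw E i j * h j = 0" unfolding aw_def by auto
  have "(\<Sum>j<n. aw E i j * h j) = 0" by (simp only: z sum.neutral_const)
  then show ?thesis using False by simp
next
  case True
  then obtain j0 where j0: "(i, j0) \<in> E" by auto
  have set_eq: "{j \<in> {..<n}. (i, j) \<in> E} = {j. (i, j) \<in> E}" using E by auto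
  have fin: "finite {j. (i, j) \<in> E}" by (rule finite_subset[of _ "{0..<n}"]) (use E in auto)
  have pos: "0 < out_deg E i" unfolding out_deg_def using j0 fin by (auto simp: card_gt_0_iff)
  have "(\<Sum>j<n. aw E i j * h j) \<le> (\<Sum>j<n. aw E i j)"
  proof (rule sum_mono)
    fix j
    have "0 \<le> aw E i j" by (simp add: aw_def)
    then show "aw E i j * h j \<le> aw E i j" using h by (intro mult_left_le) auto
  qed
  also have "(\<Sum>j<n. aw E i j) = (\<Sum>j\<in>{j \<in> {..<n}. (i, j) \<in> E}. 1 / real (out_deg E i))"
    unfolding aw_def by (rule sum.inter_filter[symmetric]) simp
  also have "\<dots> = 1"
    using pos set_eq by (simp add: out_deg_def)
  finally show ?thesis using True by simp
qed


lemma comps_set2: "Compute v \<in> set as \<Longrightarrow> v \<in> set (comps as)"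
  by (induction as rule: comps.induct) auto

lemma run_compute_parents:
  assumes "run n E M (Compute w # ys) (F, S, C) = Some r" "(u, w) \<in> E"
  shows "u \<in> F"
  using assms by (auto split: if_splits option.splits)

lemma run_read_S:
  assumes "run n E M (Read u # ys) (F, S, C) = Some r"
  shows "u \<in> S"
  using assms by (auto split: if_splits option.splits)

lemma eval_bound:
  assumes cg: "comp_graph n E" and n: "0 < n"
    and val: "run n E M as ({}, {}, {}) = Some (F0, S0, {0..<n})"
  shows "\<exists>X\<in>O_G n E. \<forall>k\<in>{1..n}.
           mat_trace (transpose_mat X * L_tilde n E * X * W n k) - 2 * real k * real M \<le> real (io_cost as)"
proof -
  have Esub: "E \<subseteq> {0..<n} \<times> {0..<n}" using cg unfolding comp_graph_def by auto
  define cs where "cs = comps as"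
  have inv0: "distinct cs" "set cs = {0..<n}"
    using run_inv[OF val] unfolding cs_def by auto
  have len: "length cs = n" using distinct_card[OF inv0(1)] inv0(2) by simp
  define \<sigma> where "\<sigma> = inv_into {..<n} ((!) cs)"
  have bij_nth: "bij_betw ((!) cs) {..<n} {0..<n}"
    using bij_betw_nth[of cs "{..<n}" "{0..<n}"] len inv0 by simp
  have inj: "inj_on ((!) cs) {..<n}" using bij_nth unfolding bij_betw_def by auto
  have img: "(!) cs ` {..<n} = {0..<n}" using bij_nth unfolding bij_betw_def by auto
  have sig_lt: "\<sigma> v < n" if "v < n" for v
  proof -
    have "v \<in> (!) cs ` {..<n}" using img that by auto
    then show ?thesis unfolding \<sigma>_def using inv_into_into[of v "(!) cs" "{..<n}"] by auto
  qed
  have cs_sig: "cs ! \<sigma> v = v" if "v < n" for v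
  proof -
    have "v \<in> (!) cs ` {..<n}" using img that by auto
    then show ?thesis unfolding \<sigma>_def by (rule f_inv_into_f)
  qed
  have sig_cs: "\<sigma> (cs ! i) = i" if "i < n" for i
    unfolding \<sigma>_def using inv_into_f_f[OF inj] that by auto
  have bij\<sigma>: "bij_betw \<sigma> {0..<n} {0..<n}"
    using bij_betw_inv_into[OF bij_nth] unfolding \<sigma>_def by (simp add: lessThan_atLeast0)
  have pos: "\<sigma> w = length (comps xs) \<and> (\<forall>u<n. u \<in> set (comps xs) \<longleftrightarrow> \<sigma> u < length (comps xs))"
    if asx: "as = xs @ Compute w # ys" for xs w ys
  proof -
    have cse: "cs = comps xs @ w # comps ys" unfolding cs_def asx by simp
    define l where "l = length (comps xs)"
    have ln: "l < n" using len unfolding cse l_def by simp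
    have "cs ! l = w" unfolding cse l_def by simp
    then have sw: "\<sigma> w = l" using sig_cs[OF ln] by simp
    have "u \<in> set (comps xs) \<longleftrightarrow> \<sigma> u < l" if u: "u < n" for u
    proof
      assume "u \<in> set (comps xs)"
      then obtain i where i: "i < l" "comps xs ! i = u" unfolding l_def by (auto simp: in_set_conv_nth)
      have "cs ! i = u" unfolding cse using i by (simp add: nth_append l_def)
      then have "\<sigma> u = i" using sig_cs[of i] i ln by simp
      then show "\<sigma> u < l" using i by simp
    next
      assume su: "\<sigma> u < l"
      have "u = cs ! \<sigma> u" using cs_sig[OF u] by simp
      also have "\<dots> = comps xs ! \<sigma> u" unfolding cse using su by (simp add: nth_append l_def)
      finally show "u \<in> set (comps xs)" using su nth_mem[of "\<sigma> u" "comps xs"] unfolding l_def by simp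
    qed
    then show ?thesis using sw unfolding l_def by blast
  qed
  have prefix: "\<exists>F S. run n E M xs ({}, {}, {}) = Some (F, S, set (comps xs)) \<and> F \<subseteq> set (comps xs)
      \<and> card F \<le> M \<and> run n E M (Compute w # ys) (F, S, set (comps xs)) = Some (F0, S0, {0..<n})"
    if asx: "as = xs @ Compute w # ys" for xs w ys
  proof -
    obtain m where m1: "run n E M xs ({}, {}, {}) = Some m" and m2: "run n E M (Compute w # ys) m = Some (F0, S0, {0..<n})"
      using val unfolding asx by (rule run_appendD)
    obtain F S C where m: "m = (F, S, C)" by (cases m) auto
    have "F \<subseteq> C \<and> C = set (comps xs)" using run_inv[OF m1[unfolded m]] by auto
    moreover have "card F \<le> M" using run_card[OF m1[unfolded m]] by simp
    ultimately show ?thesis using m1 m2 m by auto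
  qed
  have vin: "Compute v \<in> set as" if "v < n" for v
    using comps_set[of v as] inv0(2) that unfolding cs_def by auto
  have topo: "\<sigma> u < \<sigma> v" if e: "(u, v) \<in> E" for u v
  proof -
    have uv: "u < n" "v < n" using e Esub by auto
    obtain xs ys where asx: "as = xs @ Compute v # ys" using split_list[OF vin[OF uv(2)]] by blast
    obtain F S where FS: "run n E M xs ({}, {}, {}) = Some (F, S, set (comps xs))" "F \<subseteq> set (comps xs)"
      "run n E M (Compute v # ys) (F, S, set (comps xs)) = Some (F0, S0, {0..<n})"
      using prefix[OF asx] by blast
    have "u \<in> F" using run_compute_parents[OF FS(3) e] .
    then have "u \<in> set (comps xs)" using FS(2) by auto
    then show ?thesis using pos[OF asx] uv by auto
  qed
  define X where "X = mat n n (\<lambda>(i, j). if \<sigma> i = j then 1 else (0::real))"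
  have XO: "X \<in> O_G n E" unfolding O_G_def X_def using bij\<sigma> topo by blast
  have "\<forall>k\<in>{1..n}. mat_trace (transpose_mat X * L_tilde n E * X * W n k) - 2 * real k * real M \<le> real (io_cost as)"
  proof
    fix k assume "k \<in> {1..n}"
    then have k: "0 < k" "k \<le> n" by auto
    define bl where "bl = (\<lambda>v. blk n k (\<sigma> v))"
    define g where "g = (\<lambda>i j. if bl i = bl j then 1 else (0::real))"
    define P where "P = {i \<in> {..<n}. \<exists>j. (i, j) \<in> E \<and> bl i \<noteq> bl j}"
    have sg: "\<forall>i<n. \<sigma> i < n" using sig_lt by auto
    have "mat_trace (transpose_mat X * L_tilde n E * X * W n k)
        = (\<Sum>i<n. \<Sum>j<n. L_tilde n E $$ (i, j) * W n k $$ (\<sigma> j, \<sigma> i))"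
      unfolding X_def by (rule trace_perm[OF L_carrier W_carrier sg])
    also have "\<dots> = (\<Sum>i<n. \<Sum>j<n. L_tilde n E $$ (i, j) * g j i)"
      by (intro sum.cong refl) (simp add: W_entry[OF k(1)] sig_lt g_def bl_def)
    also have "\<dots> = 2 * (\<Sum>i<n. \<Sum>j<n. aw E i j * (1 - g i j))"
      by (rule lap_sum) (auto simp: g_def)
    also have "(\<Sum>i<n. \<Sum>j<n. aw E i j * (1 - g i j)) \<le> (\<Sum>i<n. if i \<in> P then 1 else 0)"
    proof (rule sum_mono)
      fix i assume i: "i \<in> {..<n}"
      have "(\<Sum>j<n. aw E i j * (1 - g i j)) \<le> (if (\<exists>j. (i, j) \<in> E \<and> 1 - g i j \<noteq> 0) then 1 else 0)"
        by (rule row_bound[OF Esub]) (auto simp: g_def)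
      also have "\<dots> = (if i \<in> P then 1 else 0)"
        using i unfolding P_def g_def by auto
      finally show "(\<Sum>j<n. aw E i j * (1 - g i j)) \<le> (if i \<in> P then 1 else 0)" .
    qed
    also have "(\<Sum>i<n. if i \<in> P then 1 else (0::real)) = real (card P)"
    proof -
      have "(\<Sum>i<n. if i \<in> P then 1 else (0::real)) = (\<Sum>i\<in>{i \<in> {..<n}. i \<in> P}. 1)"
        by (rule sum.inter_filter[symmetric]) simp
      also have "{i \<in> {..<n}. i \<in> P} = P" unfolding P_def by auto
      finally show ?thesis by simp
    qed
    finally have trP: "mat_trace (transpose_mat X * L_tilde n E * X * W n k) \<le> 2 * real (card P)"
      by simp
    define pre where "pre w = (SOME xs. \<exists>ys. as = xs @ Compute w # ys)" for w
    have pre: "\<exists>ys. as = pre w @ Compute w # ys" if "w < n" for w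
    proof -
      have "\<exists>xs ys. as = xs @ Compute w # ys" using split_list[OF vin[OF that]] by blast
      then show ?thesis unfolding pre_def by (rule someI_ex)
    qed
    define Fb where "Fb j = fst (the (run n E M (pre (cs ! block_start n k (Suc j))) ({}, {}, {})))" for j
    have Fb: "finite (Fb j) \<and> card (Fb j) \<le> M" if "block_start n k (Suc j) < n" for j
    proof -
      define w where "w = cs ! block_start n k (Suc j)"
      have "w \<in> set cs" unfolding w_def using that len by simp
      then have w: "w < n" using inv0 by auto
      obtain ys where asx: "as = pre w @ Compute w # ys" using pre[OF w] by blast
      obtain F S where FS: "run n E M (pre w) ({}, {}, {}) = Some (F, S, set (comps (pre w)))"
        "F \<subseteq> set (comps (pre w))" "card F \<le> M"
        using prefix[OF asx] by blast
      have "Fb j = F" unfolding Fb_def w_def[symmetric] FS(1) by simp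
      moreover have "finite F" using finite_subset[OF FS(2)] by simp
      ultimately show ?thesis using FS(3) by simp
    qed
    define A where "A = (\<Union>j<k. {u \<in> Fb j. bl u = j \<and> block_start n k (Suc j) < n})"
    have cardA: "card A \<le> k * M" and finA: "finite A"
    proof -
      have each: "finite {u \<in> Fb j. bl u = j \<and> block_start n k (Suc j) < n}
          \<and> card {u \<in> Fb j. bl u = j \<and> block_start n k (Suc j) < n} \<le> M" for j
      proof (cases "block_start n k (Suc j) < n")
        case True
        have fF: "finite (Fb j)" and cF: "card (Fb j) \<le> M" using Fb[OF True] by simp_all
        have sub: "{u \<in> Fb j. bl u = j \<and> block_start n k (Suc j) < n} \<subseteq> Fb j" by blast
        show ?thesis
        proof (intro conjI)
          show "finite {u \<in> Fb j. bl u = j \<and> block_start n k (Suc j) < n}" using finite_subset[OF sub fF] .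
          have "card {u \<in> Fb j. bl u = j \<and> block_start n k (Suc j) < n} \<le> card (Fb j)" using card_mono[OF fF sub] .
          then show "card {u \<in> Fb j. bl u = j \<and> block_start n k (Suc j) < n} \<le> M" using cF by linarith
        qed
      next
        case False
        then show ?thesis by simp
      qed
      show "finite A" unfolding A_def by (rule finite_UN_I) (simp, use each in blast)
      have "card A \<le> (\<Sum>j<k. card {u \<in> Fb j. bl u = j \<and> block_start n k (Suc j) < n})"
        unfolding A_def by (rule card_UN_le) simp
      also have "\<dots> \<le> (\<Sum>j<k. M)" by (rule sum_mono) (use each in blast)
      finally show "card A \<le> k * M" by simp
    qed
    define B where "B = {u. Read u \<in> set as \<and> Write u \<in> set as}"
    have PAB: "P \<subseteq> A \<union> B"
    proof
      fix u assume "u \<in> P"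
      then obtain v where u: "u < n" and e: "(u, v) \<in> E" and buv: "bl u \<noteq> bl v" unfolding P_def by auto
      have v: "v < n" using e Esub by auto
      have suv: "\<sigma> u < \<sigma> v" using topo[OF e] .
      have "bl u \<le> bl v" unfolding bl_def using blk_mono[OF k(1) less_imp_le[OF suv] sig_lt[OF v]] .
      with buv have blt: "bl u < bl v" by simp
      define j where "j = bl u"
      have jk: "j < k" unfolding j_def bl_def using blk_props(1)[OF k(1) sig_lt[OF u]] .
      define c where "c = block_start n k (Suc j)"
      have "c \<le> block_start n k (bl v)" unfolding c_def j_def using blt by (intro bs_mono) simp
      also have "\<dots> \<le> \<sigma> v" unfolding bl_def using blk_props(2)[OF k(1) sig_lt[OF v]] .
      finally have cv: "c \<le> \<sigma> v" .
      have cn: "c < n" using cv sig_lt[OF v] by simp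
      have uc: "\<sigma> u < c" unfolding c_def j_def bl_def using blk_props(3)[OF k(1) sig_lt[OF u]] .
      define w where "w = cs ! c"
      have "w \<in> set cs" unfolding w_def using cn len by simp
      then have w: "w < n" using inv0 by auto
      have sw: "\<sigma> w = c" unfolding w_def using sig_cs[OF cn] .
      obtain ys where asx: "as = pre w @ Compute w # ys" using pre[OF w] by blast
      define xs where "xs = pre w"
      have asx': "as = xs @ Compute w # ys" using asx unfolding xs_def .
      obtain F S where FS: "run n E M xs ({}, {}, {}) = Some (F, S, set (comps xs))"
        "F \<subseteq> set (comps xs)"
        "run n E M (Compute w # ys) (F, S, set (comps xs)) = Some (F0, S0, {0..<n})"
        using prefix[OF asx'] by blast
      have lc: "length (comps xs) = c" using pos[OF asx'] sw by simp
      have uC: "u \<in> set (comps xs)" using pos[OF asx'] u uc lc by auto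
      have vC: "v \<notin> set (comps xs)" using pos[OF asx'] v cv lc by auto
      have FbF: "Fb j = F" unfolding Fb_def c_def[symmetric] w_def[symmetric] xs_def[symmetric] FS(1) by simp
      show "u \<in> A \<union> B"
      proof (cases "u \<in> F")
        case True
        then have "u \<in> A" unfolding A_def using jk FbF cn unfolding c_def j_def by auto
        then show ?thesis by simp
      next
        case False
        have "Compute v \<notin> set xs" using vC comps_set2 by blast
        moreover have "Compute v \<in> set as" using vin[OF v] .
        ultimately have cv2: "Compute v \<in> set (Compute w # ys)" using asx' by auto
        obtain p q where pq: "Compute w # ys = p @ Compute v # q" using split_list[OF cv2] by blast
        obtain m1 where m1: "run n E M p (F, S, set (comps xs)) = Some m1"
          and m2: "run n E M (Compute v # q) m1 = Some (F0, S0, {0..<n})"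
          using FS(3) unfolding pq by (rule run_appendD)
        obtain F1 S1 C1 where m1e: "m1 = (F1, S1, C1)" by (cases m1) auto
        have "u \<in> F1" using run_compute_parents[OF m2[unfolded m1e] e] .
        then have "Read u \<in> set p" using read_needed[OF m1[unfolded m1e]] False uC by blast
        then have ras: "Read u \<in> set as" using asx' pq by auto
        obtain r1 r2 where r: "as = r1 @ Read u # r2" using split_list[OF ras] by blast
        obtain m3 where m3: "run n E M r1 ({}, {}, {}) = Some m3"
          and m4: "run n E M (Read u # r2) m3 = Some (F0, S0, {0..<n})"
          using val unfolding r by (rule run_appendD)
        obtain F3 S3 C3 where m3e: "m3 = (F3, S3, C3)" by (cases m3) auto
        have "u \<in> S3" using run_read_S[OF m4[unfolded m3e]] .
        then have "Write u \<in> set r1" using write_needed[OF m3[unfolded m3e]] by simp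
        then have "Write u \<in> set as" using r by auto
        then show ?thesis unfolding B_def using ras by simp
      qed
    qed
    have finB: "finite B"
    proof -
      have "B \<subseteq> Read -` set as" unfolding B_def by auto
      moreover have "finite (Read -` set as)" by (rule finite_vimageI) (auto simp: inj_def)
      ultimately show ?thesis using finite_subset by blast
    qed
    have ioB: "2 * card B \<le> io_cost as"
    proof -
      have sub: "Read ` B \<union> Write ` B \<subseteq> set (filter is_io as)" unfolding B_def by auto
      have "card (Read ` B \<union> Write ` B) = card (Read ` B) + card (Write ` B)"
        by (rule card_Un_disjoint) (use finB in auto)
      also have "\<dots> = 2 * card B"
        using card_image[of Read B] card_image[of Write B] by (simp add: inj_on_def)
      finally have "2 * card B = card (Read ` B \<union> Write ` B)" by simp
      also have "\<dots> \<le> card (set (filter is_io as))" by (rule card_mono) (use sub in auto)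
      also have "\<dots> \<le> length (filter is_io as)" by (rule card_length)
      finally show ?thesis unfolding io_cost_def .
    qed
    have "card P \<le> card (A \<union> B)" by (rule card_mono) (use PAB finA finB in auto)
    also have "\<dots> \<le> card A + card B" by (rule card_Un_le)
    finally have "card P \<le> k * M + card B" using cardA by simp
    then have "2 * card P \<le> 2 * (k * M) + io_cost as" using ioB by simp
    then have "real (2 * card P) \<le> real (2 * (k * M) + io_cost as)" by (simp only: of_nat_le_iff)
    then have "2 * real (card P) \<le> 2 * real k * real M + real (io_cost as)" by simp
    then show "mat_trace (transpose_mat X * L_tilde n E * X * W n k) - 2 * real k * real M \<le> real (io_cost as)"
      using trP by simp
  qed
  then show ?thesis using XO by blast
qed


lemma finite_OG: "finite (O_G n E)"
proof -
  have "O_G n E \<subseteq> (\<lambda>\<tau>. mat n n (\<lambda>(i, j). if \<tau> i = j then 1 else (0::real))) ` ({0..<n} \<rightarrow>\<^sub>E {0..<n})"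
  proof
    fix X assume "X \<in> O_G n E"
    then obtain \<sigma> where b: "bij_betw \<sigma> {0..<n} {0..<n}"
      and X: "X = mat n n (\<lambda>(i, j). if \<sigma> i = j then 1 else 0)" unfolding O_G_def by auto
    have "restrict \<sigma> {0..<n} \<in> {0..<n} \<rightarrow>\<^sub>E {0..<n}" using b by (auto simp: bij_betw_def)
    moreover have "X = mat n n (\<lambda>(i, j). if restrict \<sigma> {0..<n} i = j then 1 else 0)"
      unfolding X by (rule eq_matI) auto
    ultimately show "X \<in> (\<lambda>\<tau>. mat n n (\<lambda>(i, j). if \<tau> i = j then 1 else (0::real))) ` ({0..<n} \<rightarrow>\<^sub>E {0..<n})"
      by blast
  qed
  moreover have "finite ((\<lambda>\<tau>. mat n n (\<lambda>(i, j). if \<tau> i = j then 1 else (0::real))) ` ({0..<n} \<rightarrow>\<^sub>E {0..<n}))"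
    by (intro finite_imageI finite_PiE) simp_all
  ultimately show ?thesis by (rule finite_subset)
qed

theorem theorem4p3:
  fixes n M :: nat and E :: "(nat \<times> nat) set"
  assumes "comp_graph n E" and "0 < n"
  shows "ereal_of_enat (J_star n E M) \<ge>
    ereal (Min ((\<lambda>X. Max ((\<lambda>k. mat_trace (transpose_mat X * L_tilde n E * X * W n k)
                                   - 2 * real k * real M) ` {1..n})) ` O_G n E))"
proof (cases "{as. valid_eval n E M as} = {}")
  case True
  then have "J_star n E M = \<infinity>" unfolding J_star_def by (simp only: image_empty Inf_enat_def) simp
  then show ?thesis by simp
next
  case False
  define T where "T = (\<lambda>as. enat (io_cost as)) ` {as. valid_eval n E M as}"
  obtain x where "x \<in> T" using False unfolding T_def by auto
  then have "(LEAST y. y \<in> T) \<in> T" by (rule LeastI)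
  moreover have "Inf T = (LEAST y. y \<in> T)" unfolding Inf_enat_def using \<open>x \<in> T\<close> by auto
  ultimately have "Inf T \<in> T" by simp
  then obtain as where v: "valid_eval n E M as" and J: "J_star n E M = enat (io_cost as)"
    unfolding J_star_def T_def by auto
  obtain F S where run: "run n E M as ({}, {}, {}) = Some (F, S, {0..<n})"
    using v unfolding valid_eval_def by auto
  obtain X where XO: "X \<in> O_G n E" and bnd: "\<forall>k\<in>{1..n}.
      mat_trace (transpose_mat X * L_tilde n E * X * W n k) - 2 * real k * real M \<le> real (io_cost as)"
    using eval_bound[OF assms run] by blast
  have m1: "Max ((\<lambda>k. mat_trace (transpose_mat X * L_tilde n E * X * W n k)
                                   - 2 * real k * real M) ` {1..n}) \<le> real (io_cost as)"
    using bnd assms(2) by (subst Max_le_iff) auto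
  have m2: "Min ((\<lambda>X. Max ((\<lambda>k. mat_trace (transpose_mat X * L_tilde n E * X * W n k)
                                   - 2 * real k * real M) ` {1..n})) ` O_G n E)
      \<le> Max ((\<lambda>k. mat_trace (transpose_mat X * L_tilde n E * X * W n k)
                                   - 2 * real k * real M) ` {1..n})"
    by (rule Min_le) (use finite_OG XO in auto)
  show ?thesis using m1 m2 J by simp
qed

end
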